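(* In the second phase of the algorithm EM-GenPA (described in the context), processing the host requests sorted in ascending order by requested degree first and by new node (equivalently, time) second yields the same output distribution as processing them in ascending order of time; i.e., it correctly retains the output distribution of general preferential attachment.
   Context: General preferential attachment: start from a seed graph $G_0=(V_0,E_0)$ with $n_0$ nodes; iteratively add $N$ new nodes $v_{n_0+1},\dots,v_{n_0+N}$, each connected to $\ell\le n_0$ different earlier nodes (hosts), where a node $h$ of degree $d$ is chosen as host with probability proportional to $f(d)$ for a function $f:\mathbb N\to\mathbb R$. EM-GenPA works in two phases. Phase 1 samples, for each new node $v_{n_0+i}$ and each $j\in\{1,\dots,\ell\}$, only the degree $d_j$ of its $j$-th host (using counters of how many nodes currently have each degree), producing a host request $(v_{n_0+i},j,d_j)$ with time $t=\ell i+j$. Phase 2 resolves the requests: let $M(d,t)$ be the set of nodes having degree $d$ after time $t$, with $M(d,0)$ the seed nodes of degree $d$, and new node $v_{n_0+i}$ entering the set of degree-$\ell$ nodes at time $\ell(i+1)$. Processing a request for degree $d$ at time $t$ picks a node $u$ uniformly at random from $M(d,t-1)$, connects it to the requesting new node, and sets $M(d,t)=M(d,t-1)\setminus\{u\}$ and $M(d+1,t)=M(d+1,t-1)\cup\{u\}$. *)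

theory Defs
  imports "HOL-Probability.Probability_Mass_Function"
begin

text \<open>Nodes are natural numbers: seed nodes are 1..n0, new node v_(n0+i) is n0+i (1 <= i <= N).
  The seed graph is a set E0 of 2-element edges on {1..n0}.\<close>

definition seed_graph :: "nat \<Rightarrow> nat set set \<Rightarrow> bool" where
  "seed_graph n0 E0 \<longleftrightarrow> (\<forall>e\<in>E0. e \<subseteq> {1..n0} \<and> card e = 2)"

definition seed_deg :: "nat set set \<Rightarrow> nat \<Rightarrow> nat" where
  "seed_deg E0 u = card {e\<in>E0. u \<in> e}"

definition req_times :: "nat \<Rightarrow> nat \<Rightarrow> nat set" where
  "req_times l N = {l*i + j | i j. 1 \<le> i \<and> i \<le> N \<and> 1 \<le> j \<and> j \<le> l}"

text \<open>M(d,t): nodes of degree d after time t, given a (partial) resolution h of the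
  requests (h t = Some u: request at time t has been resolved to host u; None: not
  (yet) resolved). req t is the requested degree of the request at time t.\<close>
fun Mset :: "nat \<Rightarrow> nat set set \<Rightarrow> nat \<Rightarrow> nat \<Rightarrow> (nat \<Rightarrow> nat) \<Rightarrow> (nat \<Rightarrow> nat option)
             \<Rightarrow> nat \<Rightarrow> nat \<Rightarrow> nat set" where
  "Mset n0 E0 l N req h d 0 = {u \<in> {1..n0}. seed_deg E0 u = d}"
| "Mset n0 E0 l N req h d (Suc t) =
     (let base = Mset n0 E0 l N req h d t;
          after = (case h (Suc t) of
                     None \<Rightarrow> base
                   | Some u \<Rightarrow> (if req (Suc t) = d then base - {u}
                               else if Suc (req (Suc t)) = d then insert u base
                               else base))
      in if d = l then after \<union> {n0 + i | i. 1 \<le> i \<and> i \<le> N \<and> l * (i + 1) = Suc t}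
         else after)"

fun process :: "nat \<Rightarrow> nat set set \<Rightarrow> nat \<Rightarrow> nat \<Rightarrow> (nat \<Rightarrow> nat) \<Rightarrow> nat list
                \<Rightarrow> (nat \<Rightarrow> nat option) \<Rightarrow> (nat \<Rightarrow> nat option) option pmf" where
  "process n0 E0 l N req [] h = return_pmf (Some h)"
| "process n0 E0 l N req (t # ts) h =
     (let S = Mset n0 E0 l N req h (req t) (t - 1)
      in if S = {} then return_pmf None
         else bind_pmf (pmf_of_set S) (\<lambda>u. process n0 E0 l N req ts (h(t := Some u))))"

definition time_order :: "nat \<Rightarrow> nat \<Rightarrow> nat list" where
  "time_order l N = sorted_list_of_set (req_times l N)"

text \<open>Ascending by requested degree, ties by time: sort_key is a stable sort
  (insertion sort), applied to the list of times in ascending order.\<close>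
definition degree_time_order :: "nat \<Rightarrow> nat \<Rightarrow> (nat \<Rightarrow> nat) \<Rightarrow> nat list" where
  "degree_time_order l N req = sort_key req (time_order l N)"

end

theory Submission
  imports Defs
begin

definition depn :: "(nat \<Rightarrow> nat) \<Rightarrow> nat \<Rightarrow> nat \<Rightarrow> bool" where
  "depn req s t \<longleftrightarrow> s \<le> t - 1 \<and> (req s = req t \<or> Suc (req s) = req t)"

lemma Mset_frame:
  assumes "s > T \<or> (req s \<noteq> d \<and> Suc (req s) \<noteq> d)"
  shows "Mset n0 E0 l N req (h(s := x)) d T = Mset n0 E0 l N req h d T"
  using assms
proof (induction T)
  case 0
  then show ?case by simp
next
  case (Suc T)
  have IH: "Mset n0 E0 l N req (h(s := x)) d T = Mset n0 E0 l N req h d T"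
    by (rule Suc.IH) (use Suc.prems in auto)
  show ?case
  proof (cases "s = Suc T")
    case True
    then have "req (Suc T) \<noteq> d \<and> Suc (req (Suc T)) \<noteq> d" using Suc.prems by auto
    then show ?thesis using IH True by (simp only: Mset.simps) (simp add: Let_def split: option.splits)
  next
    case False
    then have hs: "(h(s := x)) (Suc T) = h (Suc T)" by simp
    show ?thesis by (simp only: Mset.simps IH hs)
  qed
qed

lemma swap:
  assumes "\<not> depn req s t" "\<not> depn req t s"
  shows "process n0 E0 l N req (t # s # ts) h = process n0 E0 l N req (s # t # ts) h"
proof (cases "s = t")
  case True then show ?thesis by simp
next
  case False
  define St where "St = Mset n0 E0 l N req h (req t) (t - 1)"
  define Ss where "Ss = Mset n0 E0 l N req h (req s) (s - 1)"
  have A: "\<And>u. Mset n0 E0 l N req (h(t := Some u)) (req s) (s - 1) = Ss"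
    unfolding Ss_def using assms(2) by (intro Mset_frame) (auto simp: depn_def)
  have B: "\<And>u. Mset n0 E0 l N req (h(s := Some u)) (req t) (t - 1) = St"
    unfolding St_def using assms(1) by (intro Mset_frame) (auto simp: depn_def)
  have L: "process n0 E0 l N req (t # s # ts) h =
     (if St = {} then return_pmf None else bind_pmf (pmf_of_set St) (\<lambda>u.
        if Ss = {} then return_pmf None else bind_pmf (pmf_of_set Ss) (\<lambda>v.
          process n0 E0 l N req ts (h(t := Some u, s := Some v)))))"
    using A by (simp add: St_def Let_def)
  have R: "process n0 E0 l N req (s # t # ts) h =
     (if Ss = {} then return_pmf None else bind_pmf (pmf_of_set Ss) (\<lambda>v.
        if St = {} then return_pmf None else bind_pmf (pmf_of_set St) (\<lambda>u.
          process n0 E0 l N req ts (h(s := Some v, t := Some u)))))"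
    using B by (simp add: Ss_def Let_def)
  have C: "\<And>u v. h(t := Some u, s := Some v) = h(s := Some v, t := Some u)"
    using False by (simp add: fun_upd_twist)
  show ?thesis unfolding L R C
    by (cases "St = {}"; cases "Ss = {}"; simp add: bind_commute_pmf[of "pmf_of_set St"])
qed

lemma process_cons_cong:
  assumes "\<And>h. process n0 E0 l N req r1 h = process n0 E0 l N req r2 h"
  shows "process n0 E0 l N req (y # r1) h = process n0 E0 l N req (y # r2) h"
  using assms by (simp add: Let_def)

lemma bubble:
  assumes "\<forall>a\<in>set as. \<not> depn req a y \<and> \<not> depn req y a"
  shows "process n0 E0 l N req (as @ y # bs) h = process n0 E0 l N req (y # as @ bs) h"
  using assms
proof (induction as arbitrary: h)
  case Nil
  then show ?case by simp
next
  case (Cons a as)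
  have "process n0 E0 l N req (a # as @ y # bs) h = process n0 E0 l N req (a # y # as @ bs) h"
    by (rule process_cons_cong) (use Cons in auto)
  also have "\<dots> = process n0 E0 l N req (y # a # as @ bs) h"
    by (rule swap) (use Cons.prems in auto)
  finally show ?case by simp
qed

lemma perm_eq:
  assumes "distinct xs" "distinct ys" "set xs = set ys"
    "sorted_wrt (\<lambda>a b. \<not> depn req b a) xs" "sorted_wrt (\<lambda>a b. \<not> depn req b a) ys"
  shows "process n0 E0 l N req xs h = process n0 E0 l N req ys h"
  using assms
proof (induction ys arbitrary: xs h)
  case Nil
  then show ?case by simp
next
  case (Cons y ys)
  have "y \<in> set xs" using Cons.prems by auto
  then obtain as bs where xs: "xs = as @ y # bs" by (meson split_list)
  have ind: "\<forall>a\<in>set as. \<not> depn req a y \<and> \<not> depn req y a"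
  proof
    fix a assume a: "a \<in> set as"
    have "\<not> depn req y a" using Cons.prems(4) a unfolding xs by (auto simp: sorted_wrt_append)
    moreover have "a \<in> set ys" using a Cons.prems(1,3) unfolding xs by auto
    then have "\<not> depn req a y" using Cons.prems(5) by auto
    ultimately show "\<not> depn req a y \<and> \<not> depn req y a" by simp
  qed
  have "process n0 E0 l N req xs h = process n0 E0 l N req (y # as @ bs) h"
    unfolding xs by (rule bubble[OF ind])
  also have "\<dots> = process n0 E0 l N req (y # ys) h"
  proof (rule process_cons_cong)
    fix h
    show "process n0 E0 l N req (as @ bs) h = process n0 E0 l N req ys h"
    proof (rule Cons.IH)
      show "distinct (as @ bs)" using Cons.prems(1) xs by auto
      show "distinct ys" using Cons.prems(2) by auto
      show "set (as @ bs) = set ys" using Cons.prems(1,2,3) xs by auto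
      show "sorted_wrt (\<lambda>a b. \<not> depn req b a) (as @ bs)"
        using Cons.prems(4) xs by (auto simp: sorted_wrt_append)
      show "sorted_wrt (\<lambda>a b. \<not> depn req b a) ys" using Cons.prems(5) by auto
    qed
  qed
  finally show ?case .
qed

definition Rk :: "(nat \<Rightarrow> nat) \<Rightarrow> nat \<Rightarrow> nat \<Rightarrow> bool" where
  "Rk req a b \<longleftrightarrow> req a < req b \<or> (req a = req b \<and> a < b)"

lemma insort_R:
  assumes "sorted_wrt (Rk req) ys" "\<forall>y\<in>set ys. x < y"
  shows "sorted_wrt (Rk req) (insort_key req x ys)"
  using assms
proof (induction ys)
  case Nil
  then show ?case by simp
next
  case (Cons y ys)
  show ?case
  proof (cases "req x \<le> req y")
    case True
    have "\<forall>z\<in>set (y # ys). Rk req x z"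
    proof
      fix z assume z: "z \<in> set (y # ys)"
      have "req y \<le> req z" using Cons.prems(1) z by (auto simp: Rk_def)
      then show "Rk req x z" using True Cons.prems(2) z by (auto simp: Rk_def)
    qed
    then show ?thesis using True Cons.prems by simp
  next
    case False
    then have "Rk req y x" by (simp add: Rk_def)
    then show ?thesis using False Cons by (simp add: set_insort_key)
  qed
qed

lemma sort_R:
  assumes "sorted_wrt (<) xs"
  shows "sorted_wrt (Rk req) (sort_key req xs)"
  using assms
proof (induction xs)
  case Nil
  then show ?case by simp
next
  case (Cons x xs)
  then show ?case by (simp, intro insort_R) auto
qed

theorem lemma6:
  fixes n0 l N :: nat and E0 :: "nat set set" and req :: "nat \<Rightarrow> nat"
  assumes "seed_graph n0 E0"
    and "1 \<le> l" and "l \<le> n0"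
    and "None \<notin> set_pmf (process n0 E0 l N req (time_order l N) (\<lambda>_. None))"
  shows "process n0 E0 l N req (degree_time_order l N req) (\<lambda>_. None)
         = process n0 E0 l N req (time_order l N) (\<lambda>_. None)"
proof (rule perm_eq)
  have st: "sorted_wrt (<) (time_order l N)"
    unfolding time_order_def by (rule sorted_list_of_set.strict_sorted_key_list_of_set)
  show "distinct (time_order l N)" unfolding time_order_def by simp
  then show "distinct (degree_time_order l N req)" unfolding degree_time_order_def by simp
  show "set (degree_time_order l N req) = set (time_order l N)"
    unfolding degree_time_order_def by simp
  show "sorted_wrt (\<lambda>a b. \<not> depn req b a) (time_order l N)"
    using st by (rule sorted_wrt_mono_rel[rotated]) (auto simp: depn_def)
  show "sorted_wrt (\<lambda>a b. \<not> depn req b a) (degree_time_order l N req)"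
    unfolding degree_time_order_def using sort_R[OF st, of req]
    by (rule sorted_wrt_mono_rel[rotated]) (auto simp: depn_def Rk_def)
qed

end
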